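(* Let $n\ge1$, $1\le i\le n$ be integers, $\alpha,\beta>0$, $\tau\ge0$ with $i\beta(\tau+1)>\tau$. Put $a=\frac{(n-i+1)\tau\beta+(n-i+1)\beta+\tau}{\beta}$ and, for $k\in\{0,1,2\}$, $b_k=\frac{i\tau\beta+(i+k)\beta-\tau}{\beta}$, and let $P=\left(\frac{\beta}{\alpha}\right)^{\tau}\frac{c(i,n)^{\tau+1}}{\beta^2}$. Then $$J^{(i)}_\tau(\beta)=C_1+C_2+C_3+C_4-C_5-C_6,$$ where $C_1=P\,B(a,b_0)$, $C_2=P\,i^2B(a,b_0)\left[\Psi'(b_0)+\Psi'(a)+(\Psi(b_0)-\Psi(a))^2\right]$, $C_3=P\,(n+1)^2B(a,b_2)\left[\Psi'(b_2)+\Psi'(a)+(\Psi(b_2)-\Psi(a))^2\right]$, $C_4=P\,2i\,B(a,b_0)\left[\Psi(b_0)-\Psi(a)\right]$, $C_5=P\,2(n+1)B(a,b_1)\left[\Psi(b_1)-\Psi(a)\right]$, $C_6=P\,2i(n+1)B(a,b_1)\left[\Psi'(b_1)+\Psi'(a)+(\Psi(b_1)-\Psi(a))^2\right]$.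
   Context: $c(i,n)=\frac{n!}{(n-i)!(i-1)!}$ and $f^{(i)}_{\alpha,\beta}(x)=\frac{c(i,n)\beta (x/\alpha)^{i\beta-1}}{\alpha(1+(x/\alpha)^\beta)^{n+1}}$, $x>0$, is the density of the $i$-th order statistic of a sample of size $n$ from the log-logistic distribution with scale $\alpha$ and shape $\beta$. With $\alpha$ regarded as known, $J^{(i)}_\tau(\beta)=\int_0^\infty\left(\frac{\partial}{\partial\beta}\log f^{(i)}_{\alpha,\beta}(x)\right)^2 f^{(i)}_{\alpha,\beta}(x)^{\tau+1}dx$. $B$ is the Beta function, $\Psi$ the digamma function and $\Psi'$ its derivative (trigamma function). *)

theory Defs
  imports "HOL-Analysis.Analysis"
begin

definition ccoef :: "nat \<Rightarrow> nat \<Rightarrow> real" where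
  "ccoef i n = fact n / (fact (n - i) * fact (i - 1))"

text \<open>Density of the i-th order statistic of a sample of size n from the
  log-logistic distribution with scale alpha and shape beta (for x > 0).\<close>
definition ll_os_density :: "nat \<Rightarrow> nat \<Rightarrow> real \<Rightarrow> real \<Rightarrow> real \<Rightarrow> real" where
  "ll_os_density i n \<alpha> \<beta> x =
     ccoef i n * \<beta> * (x / \<alpha>) powr (real i * \<beta> - 1)
     / (\<alpha> * (1 + (x / \<alpha>) powr \<beta>) ^ (n + 1))"

definition ll_os_score :: "nat \<Rightarrow> nat \<Rightarrow> real \<Rightarrow> real \<Rightarrow> real \<Rightarrow> real" where
  "ll_os_score i n \<alpha> \<beta> x = deriv (\<lambda>b. ln (ll_os_density i n \<alpha> b x)) \<beta>"

definition J_tau :: "nat \<Rightarrow> nat \<Rightarrow> real \<Rightarrow> real \<Rightarrow> real \<Rightarrow> real" where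
  "J_tau i n \<tau> \<alpha> \<beta> =
     (LINT x:{0<..}|lborel. (ll_os_score i n \<alpha> \<beta> x)\<^sup>2 * (ll_os_density i n \<alpha> \<beta> x) powr (\<tau> + 1))"

end

theory Submission
  imports Defs "HOL-Real_Asymp.Real_Asymp"
begin


definition KK :: "real \<Rightarrow> real \<Rightarrow> real \<Rightarrow> real" where
  "KK p q t = t powr (p - 1) * (1 - t) powr (q - 1)"
definition MM :: "real \<Rightarrow> real" where
  "MM t = ln t - ln (1 - t)"

lemma KK_meas[measurable]: "(\<lambda>t. MM t ^ m * KK p q t) \<in> borel_measurable borel"
  unfolding KK_def MM_def by measurable

lemma KK_nonneg: "KK p q t \<ge> 0"
  unfolding KK_def by simp

lemma ln_bound_aux:
  fixes y e :: real
  assumes "0 < y" "0 < e"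
  shows "ln y \<le> y powr e / e"
proof -
  have "0 < y powr e" using assms by simp
  from ln_less_self[OF this] have "ln (y powr e) < y powr e" .
  then have "e * ln y < y powr e" using assms by (simp add: ln_powr)
  then show ?thesis using assms by (simp add: field_simps)
qed

lemma powr_neg_ge1: "0 < t \<Longrightarrow> t \<le> 1 \<Longrightarrow> 0 < e \<Longrightarrow> t powr (-e) \<ge> (1::real)"
  by (simp add: powr_minus one_le_inverse powr_le1)

lemma MM_bound:
  assumes "0 < t" "t < 1" "0 < e"
  shows "\<bar>MM t\<bar> \<le> (2 / e) * (t powr (-e) * (1 - t) powr (-e))"
proof -
  define A where "A = t powr (-e)"
  define B where "B = (1 - t) powr (-e)"
  have A1: "A \<ge> 1" unfolding A_def using assms by (intro powr_neg_ge1) auto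
  have B1: "B \<ge> 1" unfolding B_def using assms by (intro powr_neg_ge1) auto
  have "- ln t = ln (1 / t)" using assms by (simp add: ln_div)
  also have "\<dots> \<le> (1/t) powr e / e" using assms by (intro ln_bound_aux) auto
  also have "(1/t) powr e = A" unfolding A_def using assms by (simp add: powr_minus_divide powr_divide)
  finally have a: "- ln t \<le> A / e" .
  have "- ln (1-t) = ln (1 / (1-t))" using assms by (simp add: ln_div)
  also have "\<dots> \<le> (1/(1-t)) powr e / e" using assms by (intro ln_bound_aux) auto
  also have "(1/(1-t)) powr e = B" unfolding B_def using assms by (simp add: powr_minus_divide powr_divide)
  finally have b: "- ln (1-t) \<le> B / e" .
  have "ln t < 0" "ln (1-t) < 0" using assms by auto
  then have "\<bar>MM t\<bar> \<le> A / e + B / e" using a b unfolding MM_def by linarith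
  also have "\<dots> \<le> (2 / e) * (A * B)"
  proof -
    have "(A - 1) * (B - 1) \<ge> 0" using A1 B1 by simp
    then have "A + B \<le> 2 * (A * B)" using A1 B1 by (simp add: algebra_simps)
    then have "(A + B) / e \<le> (2 * (A * B)) / e" using assms by (intro divide_right_mono) auto
    then show ?thesis by (simp add: add_divide_distrib)
  qed
  finally show ?thesis unfolding A_def B_def .
qed

lemma KK_integrable_Icc:
  assumes "0 < p" "0 < q"
  shows "set_integrable lborel {0<..<1} (KK p q)"
proof -
  have "set_integrable lborel {0..1} (KK p q)"
    using integrable_Beta[OF assms] unfolding KK_def by simp
  then show ?thesis by (rule set_integrable_subset) auto
qed

lemma KK_integrable:
  assumes "0 < p" "0 < q"
  shows "set_integrable lborel {0<..<1} (\<lambda>t. MM t ^ m * KK p q t)"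
proof -
  define e where "e = min p q / (2 * (real m + 1))"
  have e0: "0 < e" using assms by (simp add: e_def)
  have me: "real m * e < min p q"
  proof -
    have "real m * e = min p q * (real m / (2 * (real m + 1)))" by (simp add: e_def field_simps)
    also have "\<dots> < min p q * 1" using assms
      by (intro mult_strict_left_mono) (auto simp: field_simps)
    finally show ?thesis by simp
  qed
  have int: "set_integrable lborel {0<..<1} (\<lambda>t. (2/e)^m * KK (p - real m * e) (q - real m * e) t)"
    using KK_integrable_Icc[of "p - real m * e" "q - real m * e"] me by simp
  show ?thesis
  proof (rule set_integrable_bound[OF int])
    show "set_borel_measurable lborel {0<..<1} (\<lambda>t. MM t ^ m * KK p q t)"
      unfolding set_borel_measurable_def by measurable
    show "AE x in lborel. x \<in> {0<..<1} \<longrightarrow> norm (MM x ^ m * KK p q x) \<le>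
            norm ((2 / e) ^ m * KK (p - real m * e) (q - real m * e) x)"
    proof (intro AE_I2 impI)
      fix t :: real assume t: "t \<in> {0<..<1}"
      have "norm (MM t ^ m * KK p q t) = \<bar>MM t\<bar> ^ m * KK p q t"
        using KK_nonneg by (simp add: abs_mult power_abs)
      also have "\<dots> \<le> ((2 / e) * (t powr (-e) * (1 - t) powr (-e))) ^ m * KK p q t"
        using t e0 KK_nonneg by (intro mult_right_mono power_mono MM_bound) auto
      also have "\<dots> = (2/e)^m * ((t powr (-e)) ^ m * ((1 - t) powr (-e)) ^ m) * KK p q t"
        by (simp only: power_mult_distrib)
      also have "\<dots> = (2/e)^m * (((t powr (-e)) ^ m * t powr (p - 1)) *
                                        (((1 - t) powr (-e)) ^ m * (1 - t) powr (q - 1)))"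
        unfolding KK_def by (simp only: ac_simps)
      also have "((t powr (-e)) ^ m * t powr (p - 1)) = t powr (p - real m * e - 1)"
        using t by (simp add: powr_power powr_add[symmetric] algebra_simps)
      also have "(((1 - t) powr (-e)) ^ m * (1 - t) powr (q - 1)) = (1 - t) powr (q - real m * e - 1)"
        using t by (simp add: powr_power powr_add[symmetric] algebra_simps)
      also have "(2/e)^m * (t powr (p - real m * e - 1) * (1 - t) powr (q - real m * e - 1))
                 = (2/e)^m * KK (p - real m * e) (q - real m * e) t"
        unfolding KK_def by simp
      also have "\<dots> = norm ((2 / e) ^ m * KK (p - real m * e) (q - real m * e) t)"
        using KK_nonneg e0 by simp
      finally show "norm (MM t ^ m * KK p q t) \<le> norm ((2 / e) ^ m * KK (p - real m * e) (q - real m * e) t)" .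
    qed
  qed
qed

lemma KK_shift:
  assumes "0 < t" "t < 1"
  shows "KK (p + h) (q - h) t = KK p q t * exp (h * MM t)"
  using assms unfolding KK_def MM_def
  by (simp add: powr_def exp_add[symmetric] algebra_simps)

lemma exp_taylor2: "\<bar>exp x - 1 - x\<bar> \<le> x\<^sup>2 * exp \<bar>x\<bar>" for x :: real
proof -
  obtain t where t: "\<bar>t\<bar> \<le> \<bar>x\<bar>" "exp x = (\<Sum>m<2. x ^ m / fact m) + exp t / fact 2 * x ^ 2"
    using Maclaurin_exp_le[of x 2] by blast
  have eq: "exp x - 1 - x = exp t / 2 * x\<^sup>2" using t(2) by (simp add: numeral_2_eq_2)
  have nn: "0 \<le> exp t / 2 * x\<^sup>2" by simp
  have e1: "\<bar>exp x - 1 - x\<bar> = exp t / 2 * x\<^sup>2" unfolding eq by (rule abs_of_nonneg[OF nn])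
  have e2: "exp t \<le> exp \<bar>x\<bar>" using t(1) by simp
  have e3: "exp t / 2 \<le> exp \<bar>x\<bar>" using e2 exp_gt_zero[of t] by linarith
  have "\<bar>exp x - 1 - x\<bar> \<le> exp \<bar>x\<bar> * x\<^sup>2"
    unfolding e1 using e3 by (intro mult_right_mono) auto
  then show ?thesis by (simp add: mult.commute)
qed

lemma KK_taylor:
  assumes t: "0 < t" "t < 1" and h: "\<bar>h\<bar> \<le> d"
  shows "\<bar>MM t ^ j * KK (p + h) (q - h) t - MM t ^ j * KK p q t - h * (MM t ^ Suc j * KK p q t)\<bar>
         \<le> h\<^sup>2 * (\<bar>MM t\<bar> ^ (j + 2) * (KK (p + d) (q - d) t + KK (p + (-d)) (q - (-d)) t))"
proof -
  define M where "M = MM t"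
  define K where "K = KK p q t"
  have K0: "K \<ge> 0" unfolding K_def by (rule KK_nonneg)
  have "MM t ^ j * KK (p + h) (q - h) t - MM t ^ j * KK p q t - h * (MM t ^ Suc j * KK p q t)
        = M ^ j * K * (exp (h * M) - 1 - h * M)"
    using t unfolding M_def K_def by (subst KK_shift) (auto simp: algebra_simps)
  then have "\<bar>MM t ^ j * KK (p + h) (q - h) t - MM t ^ j * KK p q t - h * (MM t ^ Suc j * KK p q t)\<bar>
        = \<bar>M\<bar> ^ j * K * \<bar>exp (h * M) - 1 - h * M\<bar>"
    using K0 by (simp add: abs_mult power_abs)
  also have "\<dots> \<le> \<bar>M\<bar> ^ j * K * ((h * M)\<^sup>2 * exp \<bar>h * M\<bar>)"
    using K0 by (intro mult_left_mono exp_taylor2) auto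
  also have "\<dots> \<le> \<bar>M\<bar> ^ j * K * ((h * M)\<^sup>2 * (exp (d * M) + exp (- d * M)))"
  proof -
    have "\<bar>h * M\<bar> \<le> \<bar>d * M\<bar>" using h by (simp add: abs_mult mult_right_mono)
    then have "exp \<bar>h * M\<bar> \<le> exp \<bar>d * M\<bar>" by simp
    also have "\<dots> \<le> exp (d * M) + exp (- d * M)"
      by (cases "d * M \<ge> 0") (auto simp: add_increasing2 add_increasing)
    finally show ?thesis using K0 by (intro mult_left_mono) auto
  qed
  also have "\<bar>M\<bar> ^ j * K * ((h * M)\<^sup>2 * (exp (d * M) + exp (- d * M)))
             = h\<^sup>2 * ((\<bar>M\<bar> ^ j * M\<^sup>2) * (K * exp (d * M) + K * exp (- d * M)))"
    by (simp add: power_mult_distrib algebra_simps)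
  also have "\<bar>M\<bar> ^ j * M\<^sup>2 = \<bar>M\<bar> ^ (j + 2)"
    by (simp add: power_add power2_abs power2_eq_square)
  also have "K * exp (d * M) = KK (p + d) (q - d) t" using t unfolding K_def M_def by (simp add: KK_shift)
  also have "K * exp (- d * M) = KK (p + (-d)) (q - (-d)) t" using t unfolding K_def M_def
    by (subst KK_shift) auto
  finally show ?thesis unfolding M_def .
qed

lemma deriv_from_bound:
  fixes F :: "real \<Rightarrow> real"
  assumes "d > 0" and bnd: "\<And>h. \<bar>h\<bar> \<le> d \<Longrightarrow> \<bar>F (p + h) - F p - h * D\<bar> \<le> C * h\<^sup>2"
  shows "(F has_real_derivative D) (at p)"
proof -
  have "((\<lambda>h. (F (p + h) - F p) / h - D) \<longlongrightarrow> 0) (at 0)"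
  proof (rule Lim_null_comparison)
    show "\<forall>\<^sub>F h in at 0. norm ((F (p + h) - F p) / h - D) \<le> \<bar>C\<bar> * \<bar>h\<bar>"
    proof -
      have "eventually (\<lambda>h::real. h \<noteq> 0 \<and> \<bar>h\<bar> < d) (at 0)"
        using \<open>d > 0\<close> eventually_at[of _ 0 UNIV] by (auto simp: eventually_at dist_real_def)
      then show ?thesis
      proof eventually_elim
        case (elim h)
        then have "(F (p + h) - F p) / h - D = (F (p + h) - F p - h * D) / h" by (simp add: field_simps)
        then have "norm ((F (p + h) - F p) / h - D) = \<bar>F (p + h) - F p - h * D\<bar> / \<bar>h\<bar>" by simp
        also have "\<dots> \<le> C * h\<^sup>2 / \<bar>h\<bar>" using elim bnd[of h] by (intro divide_right_mono) auto
        also have "C * h\<^sup>2 / \<bar>h\<bar> = C * \<bar>h\<bar>"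
        proof -
          have "h\<^sup>2 = \<bar>h\<bar> * \<bar>h\<bar>" by (simp add: power2_eq_square)
          then have "C * h\<^sup>2 / \<bar>h\<bar> = (C * \<bar>h\<bar>) * \<bar>h\<bar> / \<bar>h\<bar>"
            by (simp only: mult.assoc)
          also have "\<dots> = C * \<bar>h\<bar>" using elim by (intro nonzero_mult_div_cancel_right) simp
          finally show ?thesis .
        qed
        also have "\<dots> \<le> \<bar>C\<bar> * \<bar>h\<bar>" by (intro mult_right_mono) auto
        finally show ?case .
      qed
    qed
    show "((\<lambda>h. \<bar>C\<bar> * \<bar>h\<bar>) \<longlongrightarrow> 0) (at 0)"
      by (auto intro!: tendsto_eq_intros)
  qed
  then have "((\<lambda>h. (F (p + h) - F p) / h) \<longlongrightarrow> D) (at 0)"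
    by (simp add: Lim_null[symmetric])
  then show ?thesis by (simp add: DERIV_def)
qed



definition GG :: "nat \<Rightarrow> real \<Rightarrow> real \<Rightarrow> real" where
  "GG j s p = (LINT t:{0<..<1}|lborel. MM t ^ j * KK p (s - p) t)"

lemma GG_deriv:
  assumes "0 < p" "p < s"
  shows "((\<lambda>x. GG j s x) has_real_derivative GG (Suc j) s p) (at p)"
proof -
  define d where "d = min p (s - p) / 2"
  have d: "0 < d" "d < p" "d < s - p" using assms by (auto simp: d_def)
  define B where "B = (\<lambda>t. \<bar>MM t\<bar> ^ (j + 2) * (KK (p + d) (s - p - d) t + KK (p + (-d)) (s - p - (-d)) t))"
  have intabs: "set_integrable lborel {0<..<1} (\<lambda>t. \<bar>MM t\<bar> ^ k * KK a b t)" if "0 < a" "0 < b" for k a b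
  proof -
    have "set_integrable lborel {0<..<1} (\<lambda>t. \<bar>MM t ^ k * KK a b t\<bar>)"
      by (intro set_integrable_abs KK_integrable that)
    then show ?thesis using KK_nonneg by (simp add: abs_mult power_abs)
  qed
  have Bint: "set_integrable lborel {0<..<1} B"
    unfolding B_def distrib_left using d by (intro set_integral_add intabs) auto
  define C where "C = (LINT t:{0<..<1}|lborel. B t)"
  show ?thesis
  proof (rule deriv_from_bound[OF d(1)])
    fix h :: real assume h: "\<bar>h\<bar> \<le> d"
    define f where "f = (\<lambda>t. MM t ^ j * KK (p + h) (s - p - h) t - MM t ^ j * KK p (s - p) t
                              - h * (MM t ^ Suc j * KK p (s - p) t))"
    have i1: "set_integrable lborel {0<..<1} (\<lambda>t. MM t ^ j * KK (p + h) (s - p - h) t)"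
      using h d by (intro KK_integrable) auto
    have i2: "set_integrable lborel {0<..<1} (\<lambda>t. MM t ^ j * KK p (s - p) t)"
      using assms by (intro KK_integrable) auto
    have i3: "set_integrable lborel {0<..<1} (\<lambda>t. h * (MM t ^ Suc j * KK p (s - p) t))"
      using assms by (intro set_integrable_mult_right KK_integrable) auto
    have fint: "set_integrable lborel {0<..<1} f"
      unfolding f_def by (intro set_integral_diff i1 i2 i3)
    have "GG j s (p + h) - GG j s p - h * GG (Suc j) s p = (LINT t:{0<..<1}|lborel. f t)"
      unfolding f_def GG_def
      by (subst set_integral_diff(2)[OF set_integral_diff(1)[OF i1 i2] i3],
          subst set_integral_diff(2)[OF i1 i2]) (simp add: algebra_simps)
    moreover have bnd: "\<bar>f t\<bar> \<le> h\<^sup>2 * B t" if "t \<in> {0<..<1}" for t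
      using KK_taylor[of t h d j p "s - p"] that h unfolding f_def B_def by auto
    have hB: "set_integrable lborel {0<..<1} (\<lambda>t. h\<^sup>2 * B t)"
      using Bint by (rule set_integrable_mult_right)
    have "(LINT t:{0<..<1}|lborel. f t) \<le> (LINT t:{0<..<1}|lborel. h\<^sup>2 * B t)"
      using bnd by (intro set_integral_mono fint hB) (auto simp: abs_le_iff)
    moreover have "(LINT t:{0<..<1}|lborel. - f t) \<le> (LINT t:{0<..<1}|lborel. h\<^sup>2 * B t)"
      using bnd fint by (intro set_integral_mono hB) (auto simp: abs_le_iff set_integrable_def)
    moreover have "(LINT t:{0<..<1}|lborel. - f t) = - (LINT t:{0<..<1}|lborel. f t)"
      using fint by (rule set_integral_uminus)
    moreover have "(LINT t:{0<..<1}|lborel. h\<^sup>2 * B t) = C * h\<^sup>2"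
      unfolding C_def by simp
    ultimately show "\<bar>GG j s (p + h) - GG j s p - h * GG (Suc j) s p\<bar> \<le> C * h\<^sup>2"
      by linarith
  qed
qed

lemma GG0:
  assumes "0 < p" "p < s"
  shows "GG 0 s p = Beta p (s - p)"
proof -
  have "GG 0 s p = (LINT t:{0..1}|lborel. KK p (s - p) t)"
    unfolding GG_def set_lebesgue_integral_def
    by (intro Bochner_Integration.integral_cong refl) (auto simp: indicator_def KK_def)
  also have "\<dots> = integral {0..1} (KK p (s - p))"
    using integrable_Beta[of p "s - p"] assms
    by (intro set_borel_integral_eq_integral) (auto simp: KK_def)
  also have "\<dots> = Beta p (s - p)"
    using has_integral_Beta_real[of p "s - p"] assms by (intro integral_unique) (auto simp: KK_def[abs_def])
  finally show ?thesis .
qed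

lemma not_nonpos_pos: "(x::real) > 0 \<Longrightarrow> x \<notin> \<int>\<^sub>\<le>\<^sub>0"
  by auto

lemma Beta_diag_deriv:
  assumes "0 < p" "p < s"
  shows "((\<lambda>x. Beta x (s - x)) has_real_derivative
           Beta p (s - p) * (Digamma p - Digamma (s - p))) (at p)"
proof -
  have "((\<lambda>x. Gamma x * Gamma (s - x) / Gamma s) has_real_derivative
          (Gamma p * Digamma p * Gamma (s - p) + Gamma p * (Gamma (s - p) * Digamma (s - p) * (-1))) / Gamma s) (at p)"
    using assms
    by (intro derivative_eq_intros refl DERIV_chain2[OF has_field_derivative_Gamma]) (auto dest: nonpos_Ints_nonpos simp: Gamma_eq_zero_iff)
  then show ?thesis
    unfolding Beta_def by (simp add: algebra_simps add_divide_distrib)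
qed

lemma GG1:
  assumes "0 < p" "p < s"
  shows "GG 1 s p = Beta p (s - p) * (Digamma p - Digamma (s - p))"
proof -
  have "((\<lambda>x. GG 0 s x) has_real_derivative Beta p (s - p) * (Digamma p - Digamma (s - p))) (at p)"
    by (rule has_field_derivative_transform_within_open[OF Beta_diag_deriv[OF assms], of "{0<..<s}"])
       (use assms in \<open>auto simp: GG0\<close>)
  with GG_deriv[OF assms, of 0] show ?thesis by (auto dest: DERIV_unique)
qed

lemma GG2:
  assumes "0 < p" "p < s"
  shows "GG 2 s p = Beta p (s - p) *
           (Polygamma 1 p + Polygamma 1 (s - p) + (Digamma p - Digamma (s - p))\<^sup>2)"
proof -
  have D2: "((\<lambda>x. Digamma x - Digamma (s - x)) has_real_derivative
          (Polygamma 1 p - Polygamma 1 (s - p) * (-1))) (at p)"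
    using assms
    by (intro derivative_eq_intros refl DERIV_chain2[OF has_field_derivative_Polygamma])
       (auto dest: nonpos_Ints_nonpos)
  have "((\<lambda>x. Beta x (s - x) * (Digamma x - Digamma (s - x))) has_real_derivative
          Beta p (s - p) * (Digamma p - Digamma (s - p)) * (Digamma p - Digamma (s - p)) +
          Beta p (s - p) * (Polygamma 1 p - Polygamma 1 (s - p) * (-1))) (at p)"
    using DERIV_mult[OF Beta_diag_deriv[OF assms] D2] by (simp add: mult.commute)
  then have "((\<lambda>x. Beta x (s - x) * (Digamma x - Digamma (s - x))) has_real_derivative
           Beta p (s - p) *
           (Polygamma 1 p + Polygamma 1 (s - p) + (Digamma p - Digamma (s - p))\<^sup>2)) (at p)"
    by (simp add: power2_eq_square algebra_simps)
  note D = this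
  have eqs: "\<And>x. x \<in> {0<..<s} \<Longrightarrow> Beta x (s - x) * (Digamma x - Digamma (s - x)) = GG 1 s x"
  proof -
    fix x assume "x \<in> {0<..<s}"
    then have "0 < x" "x < s" by auto
    from GG1[OF this] show "Beta x (s - x) * (Digamma x - Digamma (s - x)) = GG 1 s x" by (rule sym)
  qed
  have "((\<lambda>x. GG 1 s x) has_real_derivative Beta p (s - p) *
           (Polygamma 1 p + Polygamma 1 (s - p) + (Digamma p - Digamma (s - p))\<^sup>2)) (at p)"
    by (rule has_field_derivative_transform_within_open[OF D open_greaterThanLessThan _ eqs])
       (use assms in auto)
  with GG_deriv[OF assms, of 1] show ?thesis by (auto simp: numeral_2_eq_2 dest: DERIV_unique)
qed



lemma ccoef_pos: "ccoef i n > 0"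
  unfolding ccoef_def by simp

definition SC :: "nat \<Rightarrow> nat \<Rightarrow> real \<Rightarrow> real \<Rightarrow> real \<Rightarrow> real" where
  "SC i n \<alpha> \<beta> x = 1 / \<beta> + real i * ln (x / \<alpha>)
     - real (n + 1) * (exp (\<beta> * ln (x / \<alpha>)) * ln (x / \<alpha>)) / (1 + exp (\<beta> * ln (x / \<alpha>)))"

lemma dens_pos:
  assumes "\<alpha> > 0" "b > 0" "x > 0"
  shows "ll_os_density i n \<alpha> b x > 0"
  using assms ccoef_pos[of i n] unfolding ll_os_density_def
  by (intro divide_pos_pos mult_pos_pos) (auto simp: add_pos_nonneg)

lemma ln_dens:
  assumes "\<alpha> > 0" "b > 0" "x > 0"
  shows "ln (ll_os_density i n \<alpha> b x) = ln (ccoef i n) + ln b + (real i * b - 1) * ln (x / \<alpha>)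
           - ln \<alpha> - real (n + 1) * ln (1 + exp (b * ln (x / \<alpha>)))"
proof -
  have c: "ccoef i n > 0" by (rule ccoef_pos)
  have p1: "0 < 1 + exp (b * ln (x / \<alpha>))" by (simp add: add_pos_pos)
  have "ll_os_density i n \<alpha> b x = ccoef i n * b * exp ((real i * b - 1) * ln (x / \<alpha>))
          / (\<alpha> * (1 + exp (b * ln (x / \<alpha>))) ^ (n + 1))"
    using assms unfolding ll_os_density_def by (simp add: powr_def)
  also have "ln \<dots> = ln (ccoef i n) + ln b + (real i * b - 1) * ln (x / \<alpha>)
           - ln \<alpha> - real (n + 1) * ln (1 + exp (b * ln (x / \<alpha>)))"
    using assms c p1 by (simp add: ln_mult ln_div ln_realpow del: of_nat_Suc) (simp add: algebra_simps)
  finally show ?thesis .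
qed

lemma score_eq:
  assumes "\<alpha> > 0" "\<beta> > 0" "x > 0"
  shows "ll_os_score i n \<alpha> \<beta> x = SC i n \<alpha> \<beta> x"
proof -
  define L where "L = ln (x / \<alpha>)"
  have D: "((\<lambda>b. ln (ccoef i n) + ln b + (real i * b - 1) * L - ln \<alpha> - real (n + 1) * ln (1 + exp (b * L)))
          has_real_derivative SC i n \<alpha> \<beta> x) (at \<beta>)"
    unfolding SC_def L_def[symmetric] using assms
    by (auto intro!: derivative_eq_intros simp: add_pos_pos field_simps) (simp add: add_divide_distrib)
  have "((\<lambda>b. ln (ll_os_density i n \<alpha> b x)) has_real_derivative SC i n \<alpha> \<beta> x) (at \<beta>)"
    by (rule has_field_derivative_transform_within_open[OF D, of "{0<..}"])
       (use assms in \<open>auto simp: ln_dens L_def\<close>)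
  then show ?thesis unfolding ll_os_score_def by (rule DERIV_imp_deriv)
qed



lemma subst_algebra:
  fixes \<alpha> \<beta> \<tau> t b0 a :: real
  assumes \<alpha>: "\<alpha> > 0" and \<beta>: "\<beta> > 0" and t: "0 < t" "t < 1"
    and hb: "b0 = (real i * \<tau> * \<beta> + real i * \<beta> - \<tau>) / \<beta>"
    and ha: "a = (real n + 1) * (\<tau> + 1) - b0"
  shows "(SC i n \<alpha> \<beta> (\<alpha> * exp (MM t / \<beta>)))\<^sup>2 *
           ll_os_density i n \<alpha> \<beta> (\<alpha> * exp (MM t / \<beta>)) powr (\<tau> + 1) *
           (\<alpha> * exp (MM t / \<beta>) / (\<beta> * (t * (1 - t))))
         = (\<beta> / \<alpha>) powr \<tau> * ccoef i n powr (\<tau> + 1) / \<beta>\<^sup>2 *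
           (1 + real i * MM t - real (n + 1) * t * MM t)\<^sup>2 * KK b0 a t"
proof -
  define M where "M = MM t"
  define Lt where "Lt = ln t"
  define L1 where "L1 = ln (1 - t)"
  define c where "c = ccoef i n"
  have c: "c > 0" unfolding c_def by (rule ccoef_pos)
  have M: "M = Lt - L1" unfolding M_def MM_def Lt_def L1_def ..
  define x where "x = \<alpha> * exp (M / \<beta>)"
  have x: "x > 0" unfolding x_def using \<alpha> by simp
  have lny: "ln (x / \<alpha>) = M / \<beta>" unfolding x_def using \<alpha> by simp
  have eM: "exp (\<beta> * (M / \<beta>)) = t / (1 - t)"
    using \<beta> t unfolding M Lt_def L1_def by (simp add: exp_diff)
  have one: "1 + t / (1 - t) = 1 / (1 - t)" using t by (simp add: field_simps)
  have SC: "SC i n \<alpha> \<beta> x = (1 + real i * M - real (n + 1) * t * M) / \<beta>"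
    unfolding SC_def lny eM one using t \<beta> by (simp add: field_simps)
  have D: "ln (ll_os_density i n \<alpha> \<beta> x) = ln c + ln \<beta> + (real i * \<beta> - 1) * (M / \<beta>) - ln \<alpha> + real (n + 1) * L1"
    unfolding ln_dens[OF \<alpha> \<beta> x] lny eM one c_def L1_def using t by (simp add: ln_div)
  have dpos: "ll_os_density i n \<alpha> \<beta> x > 0" by (rule dens_pos[OF \<alpha> \<beta> x])
  have Dp: "ll_os_density i n \<alpha> \<beta> x powr (\<tau> + 1) =
            exp ((\<tau> + 1) * (ln c + ln \<beta> + (real i * \<beta> - 1) * (M / \<beta>) - ln \<alpha> + real (n + 1) * L1))"
    using dpos by (simp add: powr_def D)
  have G: "\<alpha> * exp (M / \<beta>) / (\<beta> * (t * (1 - t))) = exp (ln \<alpha> + M / \<beta> - ln \<beta> - Lt - L1)"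
    using \<alpha> \<beta> t unfolding Lt_def L1_def by (simp add: exp_add exp_diff)
  have K: "KK b0 a t = exp ((b0 - 1) * Lt + (a - 1) * L1)"
    using t unfolding KK_def Lt_def L1_def by (simp add: powr_def exp_add)
  have P: "(\<beta> / \<alpha>) powr \<tau> * c powr (\<tau> + 1) = exp (\<tau> * (ln \<beta> - ln \<alpha>) + (\<tau> + 1) * ln c)"
    using \<alpha> \<beta> c by (simp add: powr_def exp_add ln_div)
  have lin: "(\<tau> + 1) * (ln c + ln \<beta> + (real i * \<beta> - 1) * (M / \<beta>) - ln \<alpha> + real (n + 1) * L1)
              + (ln \<alpha> + M / \<beta> - ln \<beta> - Lt - L1)
           = (\<tau> * (ln \<beta> - ln \<alpha>) + (\<tau> + 1) * ln c) + ((b0 - 1) * Lt + (a - 1) * L1)"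
    unfolding ha hb M using \<beta> by (simp add: field_simps)
  have "(SC i n \<alpha> \<beta> x)\<^sup>2 * ll_os_density i n \<alpha> \<beta> x powr (\<tau> + 1) * (\<alpha> * exp (M / \<beta>) / (\<beta> * (t * (1 - t))))
      = (1 + real i * M - real (n + 1) * t * M)\<^sup>2 / \<beta>\<^sup>2 *
        exp ((\<tau> + 1) * (ln c + ln \<beta> + (real i * \<beta> - 1) * (M / \<beta>) - ln \<alpha> + real (n + 1) * L1)
              + (ln \<alpha> + M / \<beta> - ln \<beta> - Lt - L1))"
    unfolding SC Dp G exp_add by (simp add: power_divide)
  also have "\<dots> = (1 + real i * M - real (n + 1) * t * M)\<^sup>2 / \<beta>\<^sup>2 *
        (exp (\<tau> * (ln \<beta> - ln \<alpha>) + (\<tau> + 1) * ln c) * exp ((b0 - 1) * Lt + (a - 1) * L1))"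
    unfolding lin exp_add ..
  also have "\<dots> = (\<beta> / \<alpha>) powr \<tau> * c powr (\<tau> + 1) / \<beta>\<^sup>2 *
           (1 + real i * M - real (n + 1) * t * M)\<^sup>2 * KK b0 a t"
    unfolding P[symmetric] K[symmetric] by simp
  finally show ?thesis unfolding x_def M_def c_def .
qed



lemma Ij: "(LINT t:{0<..<1}|lborel. MM t ^ j * KK p q t) = GG j (p + q) p"
  unfolding GG_def by simp

lemma I0: "0 < p \<Longrightarrow> 0 < q \<Longrightarrow> (LINT t:{0<..<1}|lborel. MM t ^ 0 * KK p q t) = Beta p q"
  unfolding Ij by (subst GG0) auto

lemma I1: "0 < p \<Longrightarrow> 0 < q \<Longrightarrow> (LINT t:{0<..<1}|lborel. MM t ^ 1 * KK p q t) = Beta p q * (Digamma p - Digamma q)"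
  unfolding Ij by (subst GG1) auto

lemma I2: "0 < p \<Longrightarrow> 0 < q \<Longrightarrow> (LINT t:{0<..<1}|lborel. MM t ^ 2 * KK p q t) =
    Beta p q * (Polygamma 1 p + Polygamma 1 q + (Digamma p - Digamma q)\<^sup>2)"
  unfolding Ij by (subst GG2) auto

lemma KK_t1: "0 < t \<Longrightarrow> t * KK p q t = KK (p + 1) q t"
proof -
  assume t: "0 < t"
  have "t * t powr (p - 1) = t powr (1 + (p - 1))" using t by (intro powr_mult_base) simp
  then show ?thesis unfolding KK_def by (simp add: mult.assoc[symmetric])
qed
lemma KK_t2: "0 < t \<Longrightarrow> t\<^sup>2 * KK p q t = KK (p + 2) q t"
proof -
  assume t: "0 < t"
  have "t\<^sup>2 * KK p q t = t * (t * KK p q t)" by (simp add: power2_eq_square)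
  also have "\<dots> = KK (p + 1 + 1) q t" using t by (simp add: KK_t1)
  finally show ?thesis by (simp add: add.commute)
qed

definition FF :: "nat \<Rightarrow> nat \<Rightarrow> real \<Rightarrow> real \<Rightarrow> real \<Rightarrow> real" where
  "FF i n b0 a t = KK b0 a t + (real i)\<^sup>2 * (MM t ^ 2 * KK b0 a t)
     + (real n + 1)\<^sup>2 * (MM t ^ 2 * KK (b0 + 2) a t)
     + (2 * real i) * (MM t ^ 1 * KK b0 a t)
     - (2 * (real n + 1)) * (MM t ^ 1 * KK (b0 + 1) a t)
     - (2 * real i * (real n + 1)) * (MM t ^ 2 * KK (b0 + 1) a t)"

lemma FF_eq:
  assumes "0 < t"
  shows "(1 + real i * MM t - real (n + 1) * t * MM t)\<^sup>2 * KK b0 a t = FF i n b0 a t"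
proof -
  have "(1 + real i * MM t - real (n + 1) * t * MM t)\<^sup>2 * KK b0 a t =
        KK b0 a t + (real i)\<^sup>2 * (MM t ^ 2 * KK b0 a t)
     + (real n + 1)\<^sup>2 * (MM t ^ 2 * (t\<^sup>2 * KK b0 a t))
     + (2 * real i) * (MM t ^ 1 * KK b0 a t)
     - (2 * (real n + 1)) * (MM t ^ 1 * (t * KK b0 a t))
     - (2 * real i * (real n + 1)) * (MM t ^ 2 * (t * KK b0 a t))"
    by (simp add: power2_eq_square algebra_simps)
  then show ?thesis unfolding FF_def KK_t1[OF assms] KK_t2[OF assms] .
qed

lemma FF_integral:
  assumes "0 < b0" "0 < a"
  shows "set_integrable lborel {0<..<1} (FF i n b0 a) \<and> (LINT t:{0<..<1}|lborel. FF i n b0 a t) =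
          Beta b0 a + (real i)\<^sup>2 * (Beta b0 a * (Polygamma 1 b0 + Polygamma 1 a + (Digamma b0 - Digamma a)\<^sup>2))
     + (real n + 1)\<^sup>2 * (Beta (b0 + 2) a * (Polygamma 1 (b0 + 2) + Polygamma 1 a + (Digamma (b0 + 2) - Digamma a)\<^sup>2))
     + (2 * real i) * (Beta b0 a * (Digamma b0 - Digamma a))
     - (2 * (real n + 1)) * (Beta (b0 + 1) a * (Digamma (b0 + 1) - Digamma a))
     - (2 * real i * (real n + 1)) * (Beta (b0 + 1) a * (Polygamma 1 (b0 + 1) + Polygamma 1 a + (Digamma (b0 + 1) - Digamma a)\<^sup>2))"
proof -
  have p: "0 < b0 + 1" "0 < b0 + 2" using assms by auto
  note ints = KK_integrable[OF assms(1) assms(2)] KK_integrable[OF p(1) assms(2)] KK_integrable[OF p(2) assms(2)]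
  have i0: "set_integrable lborel {0<..<1} (KK b0 a)"
    using KK_integrable[OF assms, of 0] by simp
  have i1: "set_integrable lborel {0<..<1} (\<lambda>t. (real i)\<^sup>2 * (MM t ^ 2 * KK b0 a t))"
    by (intro set_integrable_mult_right ints)
  have i2: "set_integrable lborel {0<..<1} (\<lambda>t. (real n + 1)\<^sup>2 * (MM t ^ 2 * KK (b0 + 2) a t))"
    by (intro set_integrable_mult_right ints)
  have i3: "set_integrable lborel {0<..<1} (\<lambda>t. (2 * real i) * (MM t ^ 1 * KK b0 a t))"
    by (intro set_integrable_mult_right ints)
  have i4: "set_integrable lborel {0<..<1} (\<lambda>t. (2 * (real n + 1)) * (MM t ^ 1 * KK (b0 + 1) a t))"
    by (intro set_integrable_mult_right ints)
  have i5: "set_integrable lborel {0<..<1} (\<lambda>t. (2 * real i * (real n + 1)) * (MM t ^ 2 * KK (b0 + 1) a t))"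
    by (intro set_integrable_mult_right ints)
  note s01 = set_integral_add[OF i0 i1]
  note s012 = set_integral_add[OF s01(1) i2]
  note s0123 = set_integral_add[OF s012(1) i3]
  note s4 = set_integral_diff[OF s0123(1) i4]
  note s5 = set_integral_diff[OF s4(1) i5]
  have A: "set_integrable lborel {0<..<1} (FF i n b0 a)"
    using s5(1) unfolding FF_def .
  have e0: "(LINT t:{0<..<1}|lborel. KK b0 a t) = Beta b0 a"
    using I0[OF assms] by simp
  have B: "(LINT t:{0<..<1}|lborel. FF i n b0 a t) =
          Beta b0 a + (real i)\<^sup>2 * (Beta b0 a * (Polygamma 1 b0 + Polygamma 1 a + (Digamma b0 - Digamma a)\<^sup>2))
     + (real n + 1)\<^sup>2 * (Beta (b0 + 2) a * (Polygamma 1 (b0 + 2) + Polygamma 1 a + (Digamma (b0 + 2) - Digamma a)\<^sup>2))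
     + (2 * real i) * (Beta b0 a * (Digamma b0 - Digamma a))
     - (2 * (real n + 1)) * (Beta (b0 + 1) a * (Digamma (b0 + 1) - Digamma a))
     - (2 * real i * (real n + 1)) * (Beta (b0 + 1) a * (Polygamma 1 (b0 + 1) + Polygamma 1 a + (Digamma (b0 + 1) - Digamma a)\<^sup>2))"
    unfolding FF_def s5(2) s4(2) s0123(2) s012(2) s01(2) set_integral_mult_right e0
      I1[OF assms] I2[OF assms] I1[OF p(1) assms(2)] I2[OF p(1) assms(2)] I2[OF p(2) assms(2)]
    by (rule refl)
  show ?thesis using A B by blast
qed



lemma e01: "einterval 0 1 = {0<..<(1::real)}"
  by (simp add: zero_ereal_def one_ereal_def)

lemma cont_dens:
  assumes "\<alpha> > 0" "\<beta> > 0" "y > 0"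
  shows "isCont (\<lambda>x. ll_os_density i n \<alpha> \<beta> x) y"
proof -
  have h: "0 < 1 + (y / \<alpha>) powr \<beta>" by (simp add: add_pos_nonneg)
  show ?thesis unfolding ll_os_density_def
    by (intro continuous_intros) (use h assms in auto)
qed

lemma cont_SC:
  assumes "\<alpha> > 0" "\<beta> > 0" "y > 0"
  shows "isCont (\<lambda>x. SC i n \<alpha> \<beta> x) y"
proof -
  have h: "0 < 1 + exp (\<beta> * ln (y / \<alpha>))" by (simp add: add_pos_nonneg)
  show ?thesis unfolding SC_def
    by (intro continuous_intros) (use h assms in auto)
qed

lemma cont_E:
  assumes "\<alpha> > 0" "\<beta> > 0" "y > 0"
  shows "isCont (\<lambda>x. (SC i n \<alpha> \<beta> x)\<^sup>2 * ll_os_density i n \<alpha> \<beta> x powr (\<tau> + 1)) y"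
proof -
  have h: "ll_os_density i n \<alpha> \<beta> y \<noteq> 0" using dens_pos[OF assms, of i n] by simp
  have c3: "isCont (\<lambda>x. ll_os_density i n \<alpha> \<beta> x powr (\<tau> + 1)) y"
    by (rule continuous_at_within_powr[OF cont_dens[OF assms] continuous_const h])
  have c4: "isCont (\<lambda>x. (SC i n \<alpha> \<beta> x)\<^sup>2) y"
    by (rule continuous_power[OF cont_SC[OF assms]])
  show ?thesis by (rule continuous_mult[OF c4 c3])
qed

lemma main:
  fixes n i :: nat and \<alpha> \<beta> \<tau> b0 a :: real
  assumes \<alpha>: "\<alpha> > 0" and \<beta>: "\<beta> > 0" and b0: "b0 > 0" and a: "a > 0"
    and hb: "b0 = (real i * \<tau> * \<beta> + real i * \<beta> - \<tau>) / \<beta>"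
    and ha: "a = (real n + 1) * (\<tau> + 1) - b0"
  shows "J_tau i n \<tau> \<alpha> \<beta> = (\<beta> / \<alpha>) powr \<tau> * ccoef i n powr (\<tau> + 1) / \<beta>\<^sup>2 *
          (Beta b0 a + (real i)\<^sup>2 * (Beta b0 a * (Polygamma 1 b0 + Polygamma 1 a + (Digamma b0 - Digamma a)\<^sup>2))
     + (real n + 1)\<^sup>2 * (Beta (b0 + 2) a * (Polygamma 1 (b0 + 2) + Polygamma 1 a + (Digamma (b0 + 2) - Digamma a)\<^sup>2))
     + (2 * real i) * (Beta b0 a * (Digamma b0 - Digamma a))
     - (2 * (real n + 1)) * (Beta (b0 + 1) a * (Digamma (b0 + 1) - Digamma a))
     - (2 * real i * (real n + 1)) * (Beta (b0 + 1) a * (Polygamma 1 (b0 + 1) + Polygamma 1 a + (Digamma (b0 + 1) - Digamma a)\<^sup>2)))"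
proof -
  define P where "P = (\<beta> / \<alpha>) powr \<tau> * ccoef i n powr (\<tau> + 1) / \<beta>\<^sup>2"
  define g where "g = (\<lambda>t. \<alpha> * exp (MM t / \<beta>))"
  define g' where "g' = (\<lambda>t. \<alpha> * exp (MM t / \<beta>) / (\<beta> * (t * (1 - t))))"
  define E where "E = (\<lambda>x. (SC i n \<alpha> \<beta> x)\<^sup>2 * ll_os_density i n \<alpha> \<beta> x powr (\<tau> + 1))"
  have J: "J_tau i n \<tau> \<alpha> \<beta> = (LBINT x=0..\<infinity>. E x)"
    unfolding J_tau_def interval_lebesgue_integral_0_infty E_def
    by (rule set_lebesgue_integral_cong) (use \<alpha> \<beta> in \<open>auto simp: score_eq\<close>)
  have eq: "E (g t) * g' t = P * FF i n b0 a t" if t: "t \<in> {0<..<1}" for t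
  proof -
    have "E (g t) * g' t = P * ((1 + real i * MM t - real (n + 1) * t * MM t)\<^sup>2 * KK b0 a t)"
      unfolding E_def g_def g'_def P_def using subst_algebra[OF \<alpha> \<beta> _ _ hb ha] t
      by (simp add: mult.assoc)
    also have "\<dots> = P * FF i n b0 a t" using t FF_eq[of t i n b0 a] by simp
    finally show ?thesis .
  qed
  have FFi: "set_integrable lborel {0<..<1} (FF i n b0 a)"
    and FFv: "(LINT t:{0<..<1}|lborel. FF i n b0 a t) =
          Beta b0 a + (real i)\<^sup>2 * (Beta b0 a * (Polygamma 1 b0 + Polygamma 1 a + (Digamma b0 - Digamma a)\<^sup>2))
     + (real n + 1)\<^sup>2 * (Beta (b0 + 2) a * (Polygamma 1 (b0 + 2) + Polygamma 1 a + (Digamma (b0 + 2) - Digamma a)\<^sup>2))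
     + (2 * real i) * (Beta b0 a * (Digamma b0 - Digamma a))
     - (2 * (real n + 1)) * (Beta (b0 + 1) a * (Digamma (b0 + 1) - Digamma a))
     - (2 * real i * (real n + 1)) * (Beta (b0 + 1) a * (Polygamma 1 (b0 + 1) + Polygamma 1 a + (Digamma (b0 + 1) - Digamma a)\<^sup>2))"
    using FF_integral[OF b0 a, of i n] by auto
  have PFi: "set_integrable lborel {0<..<1} (\<lambda>t. P * FF i n b0 a t)"
    using FFi by (rule set_integrable_mult_right)
  have int: "set_integrable lborel (einterval 0 1) (\<lambda>t. E (g t) * g' t)"
    unfolding e01 using PFi by (subst set_integrable_cong[OF refl refl eq]) auto
  have limA: "(g \<longlongrightarrow> 0) (at_right 0)"
    unfolding g_def MM_def using \<alpha> \<beta> by real_asymp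
  have limB: "filterlim g at_top (at_left 1)"
    unfolding g_def MM_def using \<alpha> \<beta> by real_asymp
  have S: "(LBINT x=0..\<infinity>. E x) = (LBINT t=0..1. E (g t) * g' t)"
  proof (rule interval_integral_substitution_nonneg(2)[where a=0 and b=1 and g=g and g'=g' and f=E])
    show "(0::ereal) < 1" by simp
    show "DERIV g x :> g' x" if "0 < ereal x" "ereal x < 1" for x
    proof -
      have x: "0 < x" "x < 1" using that by (auto simp: zero_ereal_def one_ereal_def)
      have d1: "((\<lambda>t. ln t - ln (1 - t)) has_real_derivative (1 / x + 1 / (1 - x))) (at x)"
        using x by (auto intro!: derivative_eq_intros simp: divide_inverse)
      have d2: "((\<lambda>t. \<alpha> * exp ((ln t - ln (1 - t)) / \<beta>)) has_real_derivative
                 \<alpha> * (exp ((ln x - ln (1 - x)) / \<beta>) * ((1 / x + 1 / (1 - x)) / \<beta>))) (at x)"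
        by (intro DERIV_cmult DERIV_chain2[OF DERIV_exp] DERIV_cdivide d1)
      have e: "\<alpha> * (exp ((ln x - ln (1 - x)) / \<beta>) * ((1 / x + 1 / (1 - x)) / \<beta>))
               = \<alpha> * exp ((ln x - ln (1 - x)) / \<beta>) / (\<beta> * (x * (1 - x)))"
      proof -
        have "1 / x + 1 / (1 - x) = 1 / (x * (1 - x))" using x by (simp add: field_simps)
        then show ?thesis by simp
      qed
      show ?thesis using d2 unfolding e g_def g'_def MM_def .
    qed
    show "isCont E (g x)" if "0 < ereal x" "ereal x < 1" for x
      unfolding E_def using \<alpha> \<beta> by (intro cont_E) (auto simp: g_def)
    show "isCont g' x" if "0 < ereal x" "ereal x < 1" for x
    proof -
      have x: "0 < x" "x < 1" using that by (auto simp: zero_ereal_def one_ereal_def)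
      have "x * (1 - x) \<noteq> 0" using x by simp
      then show ?thesis unfolding g'_def MM_def using x \<alpha> \<beta>
        by (intro continuous_intros) auto
    qed
    show "0 \<le> E (g x)" if "0 < ereal x" "ereal x < 1" for x
      unfolding E_def by simp
    show "0 \<le> g' x" if "0 \<le> ereal x" "ereal x \<le> 1" for x
    proof -
      have x: "0 \<le> x" "x \<le> 1" using that by (auto simp: zero_ereal_def one_ereal_def)
      show ?thesis unfolding g'_def using x \<alpha> \<beta>
        by (intro divide_nonneg_nonneg mult_nonneg_nonneg) auto
    qed
    show "((ereal \<circ> g \<circ> real_of_ereal) \<longlongrightarrow> 0) (at_right 0)"
      using limA by (simp add: zero_ereal_def ereal_tendsto_simps)
    show "((ereal \<circ> g \<circ> real_of_ereal) \<longlongrightarrow> \<infinity>) (at_left 1)"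
      using limB by (simp add: one_ereal_def ereal_tendsto_simps)
    show "set_integrable lborel (einterval 0 1) (\<lambda>x. E (g x) * g' x)" by (rule int)
  qed
  have "(LBINT t=0..1. E (g t) * g' t) = (LINT t:{0<..<1}|lborel. E (g t) * g' t)"
    unfolding interval_lebesgue_integral_def e01 by simp
  also have "\<dots> = (LINT t:{0<..<1}|lborel. P * FF i n b0 a t)"
    by (rule set_lebesgue_integral_cong) (auto simp: eq)
  also have "\<dots> = P * (LINT t:{0<..<1}|lborel. FF i n b0 a t)" by simp
  finally show ?thesis unfolding J S FFv P_def .
qed

theorem theorem7:
  fixes n i :: nat and \<alpha> \<beta> \<tau> :: real
  assumes "n \<ge> 1" "1 \<le> i" "i \<le> n"
    and "\<alpha> > 0" "\<beta> > 0" "\<tau> \<ge> 0"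
    and "real i * \<beta> * (\<tau> + 1) > \<tau>"
  shows
    "let a = ((real n - real i + 1) * \<tau> * \<beta> + (real n - real i + 1) * \<beta> + \<tau>) / \<beta>;
         b = (\<lambda>k::nat. (real i * \<tau> * \<beta> + (real i + real k) * \<beta> - \<tau>) / \<beta>);
         P = (\<beta> / \<alpha>) powr \<tau> * ccoef i n powr (\<tau> + 1) / \<beta>\<^sup>2;
         C1 = P * Beta a (b 0);
         C2 = P * (real i)\<^sup>2 * Beta a (b 0) *
                (Polygamma 1 (b 0) + Polygamma 1 a + (Digamma (b 0) - Digamma a)\<^sup>2);
         C3 = P * (real n + 1)\<^sup>2 * Beta a (b 2) *
                (Polygamma 1 (b 2) + Polygamma 1 a + (Digamma (b 2) - Digamma a)\<^sup>2);
         C4 = P * 2 * real i * Beta a (b 0) * (Digamma (b 0) - Digamma a);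
         C5 = P * 2 * (real n + 1) * Beta a (b 1) * (Digamma (b 1) - Digamma a);
         C6 = P * 2 * real i * (real n + 1) * Beta a (b 1) *
                (Polygamma 1 (b 1) + Polygamma 1 a + (Digamma (b 1) - Digamma a)\<^sup>2)
     in J_tau i n \<tau> \<alpha> \<beta> = C1 + C2 + C3 + C4 - C5 - C6"
proof -
  define B0 where "B0 = (real i * \<tau> * \<beta> + (real i + real (0::nat)) * \<beta> - \<tau>) / \<beta>"
  define A where "A = ((real n - real i + 1) * \<tau> * \<beta> + (real n - real i + 1) * \<beta> + \<tau>) / \<beta>"
  have bpos: "\<beta> > 0" and apos: "\<alpha> > 0" using assms by auto
  have bk: "(real i * \<tau> * \<beta> + (real i + real k) * \<beta> - \<tau>) / \<beta> = B0 + real k" for k :: nat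
    unfolding B0_def using bpos by (simp add: field_simps)
  have hb: "B0 = (real i * \<tau> * \<beta> + real i * \<beta> - \<tau>) / \<beta>"
    unfolding B0_def by (simp add: algebra_simps)
  have ha: "A = (real n + 1) * (\<tau> + 1) - B0"
    unfolding A_def B0_def using bpos by (simp add: field_simps)
  have B0pos: "B0 > 0"
    unfolding hb using bpos assms(7) by (simp add: field_simps algebra_simps)
  have Apos: "A > 0"
  proof -
    have "real n - real i + 1 \<ge> 1" using assms(3) by simp
    then have "(real n - real i + 1) * \<tau> * \<beta> \<ge> 0" "(real n - real i + 1) * \<beta> > 0"
      using bpos assms(6) by auto
    then show ?thesis unfolding A_def using bpos assms(6) by (intro divide_pos_pos) auto
  qed
  note M = main[OF apos bpos B0pos Apos hb ha]
  define P where "P = (\<beta> / \<alpha>) powr \<tau> * ccoef i n powr (\<tau> + 1) / \<beta>\<^sup>2"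
  show ?thesis
    unfolding Let_def A_def[symmetric] bk M P_def[symmetric]
    by (simp add: Beta_commute[of A] power2_eq_square algebra_simps)
qed


end
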